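(* Let $(M,d)$ be a complete geodesic space with $\mathrm{curv}(M)\le 0$ and finite diameter $\mathrm{diam}(M)>0$. Then for every $p\in M$, the function $x\mapsto d^2(p,x)$ is geodesically $\beta$-expconcave for all $0<\beta\le 1/(2\,\mathrm{diam}(M)^2)$.
   Context: A geodesic is a path $\gamma:[0,1]\to M$ with $d(\gamma(s),\gamma(t))=|t-s|\,d(\gamma(0),\gamma(1))$; a geodesic space is one where any two points are joined by a geodesic. $\mathrm{curv}(M)\le 0$ means: for all $p,x,y\in M$, every geodesic $\gamma:[0,1]\to M$ from $x$ to $y$ and every $t\in[0,1]$, $d^2(p,\gamma(t))\le (1-t)d^2(p,x)+t\,d^2(p,y)-t(1-t)d^2(x,y)$. A function $f:M\to\mathbb R$ is geodesically concave if for every geodesic $\gamma$, $t\mapsto f(\gamma(t))$ is concave on $[0,1]$; for $\beta>0$, $f$ is geodesically $\beta$-expconcave if $\exp(-\beta f)$ is geodesically concave. *)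

theory Defs
  imports "HOL-Analysis.Analysis"
begin

definition geodesic :: "(real \<Rightarrow> 'a::metric_space) \<Rightarrow> bool" where
  "geodesic g \<longleftrightarrow>
     (\<forall>s\<in>{0..1}. \<forall>t\<in>{0..1}. dist (g s) (g t) = \<bar>t - s\<bar> * dist (g 0) (g 1))"

definition geodesic_space :: "'a::metric_space itself \<Rightarrow> bool" where
  "geodesic_space TYPE('a) \<longleftrightarrow>
     (\<forall>x y::'a. \<exists>g. geodesic g \<and> g 0 = x \<and> g 1 = y)"

definition curv_nonpos :: "'a::metric_space itself \<Rightarrow> bool" where
  "curv_nonpos TYPE('a) \<longleftrightarrow>
     (\<forall>p x y::'a. \<forall>g. geodesic g \<and> g 0 = x \<and> g 1 = y \<longrightarrow>
        (\<forall>t\<in>{0..1}. (dist p (g t))\<^sup>2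
           \<le> (1 - t) * (dist p x)\<^sup>2 + t * (dist p y)\<^sup>2 - t * (1 - t) * (dist x y)\<^sup>2))"

definition geod_concave :: "('a::metric_space \<Rightarrow> real) \<Rightarrow> bool" where
  "geod_concave f \<longleftrightarrow> (\<forall>g. geodesic g \<longrightarrow> concave_on {0..1} (\<lambda>t. f (g t)))"

definition geod_expconcave :: "real \<Rightarrow> ('a::metric_space \<Rightarrow> real) \<Rightarrow> bool" where
  "geod_expconcave \<beta> f \<longleftrightarrow> geod_concave (\<lambda>x. exp (- \<beta> * f x))"

end

theory Submission
  imports Defs
begin

lemma psi_concave:
  fixes \<beta> D :: real
  assumes "0 < \<beta>" "2 * \<beta> * D\<^sup>2 \<le> 1" "0 \<le> D"
  shows "concave_on {0..D} (\<lambda>w. exp (- \<beta> * w\<^sup>2))"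
proof (rule f''_le0_imp_concave[where f' = "\<lambda>w. - 2 * \<beta> * w * exp (- \<beta> * w\<^sup>2)"
      and f'' = "\<lambda>w. (4 * \<beta>\<^sup>2 * w\<^sup>2 - 2 * \<beta>) * exp (- \<beta> * w\<^sup>2)"])
  show "convex {0..D}" by simp
  fix x :: real
  show "DERIV (\<lambda>w. exp (- \<beta> * w\<^sup>2)) x :> - 2 * \<beta> * x * exp (- \<beta> * x\<^sup>2)"
    by (auto intro!: derivative_eq_intros simp: power2_eq_square algebra_simps)
  show "DERIV (\<lambda>w. - 2 * \<beta> * w * exp (- \<beta> * w\<^sup>2)) x :> (4 * \<beta>\<^sup>2 * x\<^sup>2 - 2 * \<beta>) * exp (- \<beta> * x\<^sup>2)"
    by (auto intro!: derivative_eq_intros simp: power2_eq_square algebra_simps)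
  assume x: "x \<in> {0..D}"
  have "x\<^sup>2 \<le> D\<^sup>2" using x by (auto intro!: power_mono)
  hence "2 * \<beta> * x\<^sup>2 \<le> 1" using assms
    by (smt (verit) mult_left_mono)
  hence "4 * \<beta>\<^sup>2 * x\<^sup>2 - 2 * \<beta> \<le> 0" using assms(1)
  proof -
    have "4 * \<beta>\<^sup>2 * x\<^sup>2 - 2 * \<beta> = (2 * \<beta>) * (2 * \<beta> * x\<^sup>2 - 1)"
      by (simp add: power2_eq_square algebra_simps)
    also have "\<dots> \<le> 0" using \<open>2 * \<beta> * x\<^sup>2 \<le> 1\<close> assms(1)
      by (intro mult_nonneg_nonpos) auto
    finally show ?thesis .
  qed
  thus "(4 * \<beta>\<^sup>2 * x\<^sup>2 - 2 * \<beta>) * exp (- \<beta> * x\<^sup>2) \<le> 0"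
    by (simp add: mult_nonpos_nonneg)
qed

lemma sub_geodesic:
  assumes g: "geodesic g" and a: "a \<in> {0..1::real}" and b: "b \<in> {0..1::real}"
  shows "geodesic (\<lambda>s. g (a + s * (b - a)))"
  unfolding geodesic_def
proof (intro ballI)
  fix s t :: real assume s: "s \<in> {0..1}" and t: "t \<in> {0..1}"
  have inr: "a + r * (b - a) \<in> {0..1}" if "r \<in> {0..1}" for r
  proof -
    have "a + r * (b - a) = (1 - r) * a + r * b" by (simp add: algebra_simps)
    moreover have "0 \<le> (1 - r) * a + r * b" using a b that by auto
    moreover have "(1 - r) * a + r * b \<le> (1 - r) * 1 + r * 1"
      using a b that by (intro add_mono mult_left_mono) auto
    ultimately show ?thesis by auto
  qed
  have "dist (g (a + s * (b - a))) (g (a + t * (b - a)))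
      = \<bar>(a + t * (b - a)) - (a + s * (b - a))\<bar> * dist (g 0) (g 1)"
    using g inr[OF s] inr[OF t] unfolding geodesic_def by blast
  also have "\<dots> = \<bar>t - s\<bar> * (\<bar>b - a\<bar> * dist (g 0) (g 1))"
    proof -
      have "(a + t * (b - a)) - (a + s * (b - a)) = (t - s) * (b - a)" by (simp add: algebra_simps)
      thus ?thesis by (simp add: abs_mult)
    qed
  also have "\<bar>b - a\<bar> * dist (g 0) (g 1) = dist (g (a + 0 * (b - a))) (g (a + 1 * (b - a)))"
  proof -
    have "dist (g a) (g b) = \<bar>b - a\<bar> * dist (g 0) (g 1)"
      using g a b unfolding geodesic_def by blast
    thus ?thesis by simp
  qed
  finally show "dist (g (a + s * (b - a))) (g (a + t * (b - a)))
      = \<bar>t - s\<bar> * dist (g (a + 0 * (b - a))) (g (a + 1 * (b - a)))" .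
qed

theorem mainTheorem2:
  fixes p :: "'a::complete_space"
  assumes "geodesic_space TYPE('a)"
    and "curv_nonpos TYPE('a)"
    and "bounded (UNIV :: 'a set)"
    and "diameter (UNIV :: 'a set) > 0"
  shows "\<forall>\<beta>. 0 < \<beta> \<and> \<beta> \<le> 1 / (2 * (diameter (UNIV :: 'a set))\<^sup>2) \<longrightarrow>
           geod_expconcave \<beta> (\<lambda>x. (dist p x)\<^sup>2)"
proof (intro allI impI)
  fix \<beta> :: real
  assume hb: "0 < \<beta> \<and> \<beta> \<le> 1 / (2 * (diameter (UNIV :: 'a set))\<^sup>2)"
  define D where "D = diameter (UNIV :: 'a set)"
  have D0: "0 < D" using assms(4) D_def by simp
  have b0: "0 < \<beta>" using hb by simp
  have bD: "2 * \<beta> * D\<^sup>2 \<le> 1"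
    using hb D0 unfolding D_def[symmetric] by (simp add: field_simps)
  have dD: "dist x y \<le> D" for x y :: 'a
    unfolding D_def using diameter_bounded_bound[OF assms(3)] by simp
  have psi: "concave_on {0..D} (\<lambda>w. exp (- \<beta> * w\<^sup>2))"
    using psi_concave[OF b0 bD] D0 by simp
  show "geod_expconcave \<beta> (\<lambda>x. (dist p x)\<^sup>2)"
    unfolding geod_expconcave_def geod_concave_def
  proof (intro allI impI)
    fix g :: "real \<Rightarrow> 'a" assume g: "geodesic g"
    show "concave_on {0..1} (\<lambda>t. exp (- \<beta> * (dist p (g t))\<^sup>2))"
      unfolding concave_on_iff
    proof (intro conjI ballI allI impI)
      show "convex {0..1::real}" by simp
      fix a b u v :: real
      assume a: "a \<in> {0..1}" and b: "b \<in> {0..1}" and u: "0 \<le> u" and v: "0 \<le> v"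
        and uv: "u + v = 1"
      define g' where "g' = (\<lambda>s. g (a + s * (b - a)))"
      have g': "geodesic g'" unfolding g'_def by (rule sub_geodesic[OF g a b])
      have v1: "v \<in> {0..1}" using u v uv by auto
      have cat: "(dist p (g' v))\<^sup>2 \<le> (1 - v) * (dist p (g' 0))\<^sup>2 + v * (dist p (g' 1))\<^sup>2
            - v * (1 - v) * (dist (g' 0) (g' 1))\<^sup>2"
        using assms(2) g' v1 unfolding curv_nonpos_def by blast
      have e0: "g' 0 = g a" "g' 1 = g b" unfolding g'_def by auto
      have ev: "g' v = g (u *\<^sub>R a + v *\<^sub>R b)"
        proof -
        have uu: "u = 1 - v" using uv by simp
        have "a + v * (b - a) = u * a + v * b" unfolding uu by (simp add: algebra_simps)
        thus ?thesis unfolding g'_def by simp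
      qed
      define x where "x = dist p (g a)"
      define y where "y = dist p (g b)"
      define \<delta> where "\<delta> = dist (g a) (g b)"
      have u1: "u = 1 - v" using uv by simp
      have cat2: "(dist p (g (u *\<^sub>R a + v *\<^sub>R b)))\<^sup>2 \<le> u * x\<^sup>2 + v * y\<^sup>2 - u * v * \<delta>\<^sup>2"
        using cat unfolding e0 ev x_def y_def \<delta>_def u1 by (simp add: algebra_simps)
      have dxy: "\<bar>x - y\<bar> \<le> \<delta>" unfolding x_def y_def \<delta>_def
        by (smt (verit) dist_commute dist_triangle)
      have sq: "(x - y)\<^sup>2 \<le> \<delta>\<^sup>2"
        using dxy by (metis abs_ge_zero power2_abs power_mono)
      have uv0: "0 \<le> u * v" using u v by simp
      have key: "u * x\<^sup>2 + v * y\<^sup>2 - u * v * \<delta>\<^sup>2 \<le> (u * x + v * y)\<^sup>2"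
      proof -
        have "(u * x + v * y)\<^sup>2 = u * x\<^sup>2 + v * y\<^sup>2 - u * v * (x - y)\<^sup>2"
          unfolding u1 by (simp add: power2_eq_square algebra_simps)
        moreover have "u * v * (x - y)\<^sup>2 \<le> u * v * \<delta>\<^sup>2"
          using sq uv0 by (rule mult_left_mono)
        ultimately show ?thesis by linarith
      qed
      have xD: "x \<in> {0..D}" "y \<in> {0..D}" using dD unfolding x_def y_def by auto
      have "u * exp (- \<beta> * x\<^sup>2) + v * exp (- \<beta> * y\<^sup>2)
          \<le> exp (- \<beta> * (u *\<^sub>R x + v *\<^sub>R y)\<^sup>2)"
        using concave_onD[OF psi v v1[simplified, THEN conjunct2] xD] u1 by simp
      also have "\<dots> \<le> exp (- \<beta> * (dist p (g (u *\<^sub>R a + v *\<^sub>R b)))\<^sup>2)"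
      proof -
        have "(dist p (g (u *\<^sub>R a + v *\<^sub>R b)))\<^sup>2 \<le> (u * x + v * y)\<^sup>2"
          using cat2 key by linarith
        hence "\<beta> * (dist p (g (u *\<^sub>R a + v *\<^sub>R b)))\<^sup>2 \<le> \<beta> * (u * x + v * y)\<^sup>2"
          using b0 by (simp add: mult_left_mono)
        thus ?thesis by simp
      qed
      finally show "u * exp (- \<beta> * (dist p (g a))\<^sup>2) + v * exp (- \<beta> * (dist p (g b))\<^sup>2)
          \<le> exp (- \<beta> * (dist p (g (u *\<^sub>R a + v *\<^sub>R b)))\<^sup>2)"
        unfolding x_def y_def .
    qed
  qed
qed

end
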